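(* Let $p \in (0,1)$, $m \geq 2$, and let $f : \{0,1\}^m \to \{0,1\}$. Let $\pi : [m] \to [m-1]$ be the map with $\pi(m-1) = \pi(m) = m-1$ and $\pi(i) = i$ for every $i \in [m-2]$. Then \[ \mathrm{Inf}^{(p)}[f^\pi, m-1] \geq \min(p,1-p) \cdot \mathrm{Inf}^{(p)}[f, m-1] - \frac{1}{\min(p,1-p)} \cdot \mathrm{Inf}^{(p)}[f, m]. \]
   Context: For $p \in (0,1)$, $\mu_{p,n}$ is the product $p$-biased distribution on $\{0,1\}^n$. For $g : \{0,1\}^n \to \{0,1\}$ and $i \in [n]$, $\mathrm{Inf}^{(p)}[g,i] = \mathbb{E}_{x \sim \mu_{p,n}}\big[(g(x) - \mathbb{E}_{s\sim\mu_{p,1}}[g(x^{i\to s})])^2\big] = p(1-p)\Pr_{x\sim\mu_{p,n}}[g(x)\neq g(x\oplus i)]$, where $x^{i\to s}$ is $x$ with coordinate $i$ set to $s$ and $x\oplus i$ is $x$ with coordinate $i$ flipped. For $\pi:[m]\to[k]$, the minor $f^\pi:\{0,1\}^k\to\{0,1\}$ is $f^\pi(y) = f(y_{\pi(1)},\dots,y_{\pi(m)})$. Influences of $f^\pi$ are taken with respect to $\mu_{p,m-1}$ and those of $f$ with respect to $\mu_{p,m}$. *)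

theory Defs
  imports "HOL-Analysis.Analysis"
begin

text \<open>Points of the cube {0,1}^n are encoded as functions nat => bool that are
  False outside the coordinate set {1..n} (True = 1, False = 0).\<close>

definition cube :: "nat \<Rightarrow> (nat \<Rightarrow> bool) set" where
  "cube n = {x. \<forall>i. x i \<longrightarrow> i \<in> {1..n}}"

definition pweight :: "real \<Rightarrow> nat \<Rightarrow> (nat \<Rightarrow> bool) \<Rightarrow> real" where
  "pweight p n x = (\<Prod>i\<in>{1..n}. if x i then p else 1 - p)"

definition pexp :: "real \<Rightarrow> nat \<Rightarrow> ((nat \<Rightarrow> bool) \<Rightarrow> real) \<Rightarrow> real" where
  "pexp p n F = (\<Sum>x\<in>cube n. pweight p n x * F x)"

definition bval :: "bool \<Rightarrow> real" where
  "bval b = (if b then 1 else 0)"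

definition pinf :: "real \<Rightarrow> nat \<Rightarrow> ((nat \<Rightarrow> bool) \<Rightarrow> bool) \<Rightarrow> nat \<Rightarrow> real" where
  "pinf p n g i = pexp p n (\<lambda>x. (bval (g x)
      - (p * bval (g (x(i := True))) + (1 - p) * bval (g (x(i := False)))))\<^sup>2)"

definition minor :: "nat \<Rightarrow> ((nat \<Rightarrow> bool) \<Rightarrow> bool) \<Rightarrow> (nat \<Rightarrow> nat) \<Rightarrow> (nat \<Rightarrow> bool) \<Rightarrow> bool" where
  "minor m f \<pi> y = f (\<lambda>i. if i \<in> {1..m} then y (\<pi> i) else False)"

end

theory Submission
  imports Defs
begin

lemma cube_eq: "cube n = (\<lambda>S i. i \<in> S) ` Pow {1..n}"
proof
  show "cube n \<subseteq> (\<lambda>S i. i \<in> S) ` Pow {1..n}"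
  proof
    fix x assume "x \<in> cube n"
    hence "x = (\<lambda>i. i \<in> {i. x i})" "{i. x i} \<in> Pow {1..n}" by (auto simp: cube_def)
    thus "x \<in> (\<lambda>S i. i \<in> S) ` Pow {1..n}" by blast
  qed
qed (auto simp: cube_def)

lemma finite_cube: "finite (cube n)"
  by (simp add: cube_eq)

lemma pweight_upd: "pweight p (Suc n) (x(Suc n := b)) = (if b then p else 1 - p) * pweight p n x"
  unfolding pweight_def by (simp add: prod.cl_ivl_Suc)

lemma upd_cube: "x \<in> cube n \<Longrightarrow> x(Suc n := b) \<in> cube (Suc n)"
  unfolding cube_def by auto

lemma pexp_Suc: "pexp p (Suc n) F = p * pexp p n (\<lambda>x. F (x(Suc n := True)))
   + (1 - p) * pexp p n (\<lambda>x. F (x(Suc n := False)))"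
proof -
  let ?T = "(\<lambda>x. x(Suc n := True))" and ?F = "(\<lambda>x. x(Suc n := False))"
  have ceq: "cube (Suc n) = ?T ` cube n \<union> ?F ` cube n"
  proof
    show "cube (Suc n) \<subseteq> ?T ` cube n \<union> ?F ` cube n"
    proof
      fix x assume x: "x \<in> cube (Suc n)"
      have c: "x(Suc n := False) \<in> cube n" using x by (auto simp: cube_def le_Suc_eq)
      show "x \<in> ?T ` cube n \<union> ?F ` cube n"
      proof (cases "x (Suc n)")
        case True
        hence "x = ?T (x(Suc n := False))" by (auto simp: fun_eq_iff)
        thus ?thesis using c by blast
      next
        case False
        hence "x = ?F (x(Suc n := False))" by (auto simp: fun_eq_iff)
        thus ?thesis using c by blast
      qed
    qed
  next
    show "?T ` cube n \<union> ?F ` cube n \<subseteq> cube (Suc n)" using upd_cube by blast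
  qed
  have cn: "x \<in> cube n \<Longrightarrow> x (Suc n) = False" for x by (auto simp: cube_def)
  have injT: "inj_on ?T (cube n)"
  proof (rule inj_onI)
    fix x y assume x: "x \<in> cube n" and y: "y \<in> cube n" and e: "?T x = ?T y"
    show "x = y"
    proof
      fix i show "x i = y i" using cn[OF x] cn[OF y] fun_cong[OF e, of i] by (cases "i = Suc n") auto
    qed
  qed
  have injF: "inj_on ?F (cube n)"
  proof (rule inj_onI)
    fix x y assume x: "x \<in> cube n" and y: "y \<in> cube n" and e: "?F x = ?F y"
    show "x = y"
    proof
      fix i show "x i = y i" using cn[OF x] cn[OF y] fun_cong[OF e, of i] by (cases "i = Suc n") auto
    qed
  qed
  have disj: "?T ` cube n \<inter> ?F ` cube n = {}"
  proof -
    have "?T x \<noteq> ?F y" for x y :: "nat \<Rightarrow> bool" proof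
      assume "?T x = ?F y" hence "(?T x) (Suc n) = (?F y) (Suc n)" by simp
      thus False by simp
    qed
    thus ?thesis by blast
  qed
  have "pexp p (Suc n) F = (\<Sum>x\<in>?T ` cube n. pweight p (Suc n) x * F x) + (\<Sum>x\<in>?F ` cube n. pweight p (Suc n) x * F x)"
    unfolding pexp_def ceq by (rule sum.union_disjoint) (auto simp: finite_cube disj)
  also have "\<dots> = (\<Sum>x\<in>cube n. pweight p (Suc n) (?T x) * F (?T x)) + (\<Sum>x\<in>cube n. pweight p (Suc n) (?F x) * F (?F x))"
    by (simp add: sum.reindex injT injF)
  also have "\<dots> = p * pexp p n (\<lambda>x. F (x(Suc n := True))) + (1 - p) * pexp p n (\<lambda>x. F (x(Suc n := False)))"
    by (simp add: pexp_def pweight_upd sum_distrib_left mult.assoc)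
  finally show ?thesis .
qed

lemma pweight_nonneg: "0 \<le> p \<Longrightarrow> p \<le> 1 \<Longrightarrow> 0 \<le> pweight p n x"
  unfolding pweight_def by (rule prod_nonneg) auto

lemma pexp_mono: "0 \<le> p \<Longrightarrow> p \<le> 1 \<Longrightarrow> (\<And>x. x \<in> cube n \<Longrightarrow> F x \<le> G x) \<Longrightarrow> pexp p n F \<le> pexp p n G"
  unfolding pexp_def by (rule sum_mono) (simp add: mult_left_mono pweight_nonneg)

lemma pexp_lin: "pexp p n (\<lambda>x. a * F x + b * G x) = a * pexp p n F + b * pexp p n G"
  unfolding pexp_def by (simp add: sum.distrib sum_distrib_left algebra_simps)

lemma pexp_scale: "pexp p n (\<lambda>x. c * F x) = c * pexp p n F"
  unfolding pexp_def by (simp add: sum_distrib_left algebra_simps)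

lemma pexp_cong: "(\<And>x. x \<in> cube n \<Longrightarrow> F x = G x) \<Longrightarrow> pexp p n F = pexp p n G"
  unfolding pexp_def by (rule sum.cong) auto

lemma sq_ident: "p * (bval a - (p * bval a + (1 - p) * bval b))\<^sup>2 + (1 - p) * (bval b - (p * bval a + (1 - p) * bval b))\<^sup>2
   = p * (1 - p) * bval (a \<noteq> b)"
  by (cases a; cases b) (simp_all add: bval_def power2_eq_square algebra_simps)

lemma inf_last: "pinf p (Suc n) g (Suc n) = p * (1 - p) * pexp p n (\<lambda>x. bval (g (x(Suc n := True)) \<noteq> g (x(Suc n := False))))"
  unfolding pinf_def pexp_Suc
  by (simp add: sq_ident pexp_scale flip: pexp_lin)

lemma inf_other: "1 \<le> i \<Longrightarrow> i \<le> n \<Longrightarrow> pinf p (Suc n) g i =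
   p * pinf p n (\<lambda>z. g (z(Suc n := True))) i + (1 - p) * pinf p n (\<lambda>z. g (z(Suc n := False))) i"
  unfolding pinf_def pexp_Suc by (simp add: fun_upd_twist)

lemma pw:
  fixes p q :: real and a11 a01 a10 a00 :: bool
  assumes p: "0 < p" "p < 1" and q: "q = min p (1 - p)"
  shows "q * (p * bval (a11 \<noteq> a01) + (1 - p) * bval (a10 \<noteq> a00))
     - (1 / q) * (p * bval (a11 \<noteq> a10) + (1 - p) * bval (a01 \<noteq> a00)) \<le> bval (a11 \<noteq> a00)"
proof -
  define X where "X = p * bval (a11 \<noteq> a01) + (1 - p) * bval (a10 \<noteq> a00)"
  define Y where "Y = p * bval (a11 \<noteq> a10) + (1 - p) * bval (a01 \<noteq> a00)"
  have q0: "0 < q" "q \<le> p" "q \<le> 1 - p" "q \<le> 1" using p q by auto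
  have X0: "0 \<le> X" "X \<le> 1" unfolding X_def using p by (auto simp: bval_def)
  have Y0: "0 \<le> Y" unfolding Y_def using p by (auto simp: bval_def)
  have qX: "q * X \<le> q" using X0 q0 by (simp add: mult_left_le)
  have qX0: "0 \<le> q * X" using X0 q0 by simp
  have Yq0: "0 \<le> Y / q" using Y0 q0 by simp
  show ?thesis
  proof (cases "a11 = a00")
    case False
    hence "bval (a11 \<noteq> a00) = 1" by (simp add: bval_def)
    moreover have "(1 / q) * Y = Y / q" by simp
    ultimately show ?thesis using qX q0(4) Yq0 unfolding X_def[symmetric] Y_def[symmetric] by linarith
  next
    case True
    hence b0: "bval (a11 \<noteq> a00) = 0" by (simp add: bval_def)
    show ?thesis
    proof (cases "X = 0")
      case True
      thus ?thesis using b0 Yq0 unfolding X_def[symmetric] Y_def[symmetric] by simp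
    next
      case False
      have "Y \<ge> q" using False \<open>a11 = a00\<close> q0 p unfolding X_def Y_def
        by (cases a11; cases a01; cases a10; cases a00) (auto simp: bval_def)
      hence "1 \<le> Y / q" using q0 by simp
      moreover have "(1 / q) * Y = Y / q" by simp
      ultimately show ?thesis using b0 qX q0(4) unfolding X_def[symmetric] Y_def[symmetric] by linarith
    qed
  qed
qed

theorem mainTheorem3:
  fixes p :: real and m :: nat and f :: "(nat \<Rightarrow> bool) \<Rightarrow> bool" and \<pi> :: "nat \<Rightarrow> nat"
  assumes "0 < p" and "p < 1" and "m \<ge> 2"
    and "\<pi> m = m - 1" and "\<pi> (m - 1) = m - 1" and "\<forall>i\<in>{1..m-2}. \<pi> i = i"
  shows "pinf p (m - 1) (minor m f \<pi>) (m - 1)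
           \<ge> min p (1 - p) * pinf p m f (m - 1) - (1 / min p (1 - p)) * pinf p m f m"
proof -
  obtain n where m: "m = Suc (Suc n)" using assms(3) by (metis add_2_eq_Suc le_Suc_ex)
  define q where "q = min p (1 - p)"
  define c where "c = p * (1 - p)"
  have c0: "0 \<le> c" using assms(1,2) unfolding c_def by simp
  define A where "A = (\<lambda>s t x. f (x(Suc n := s, Suc (Suc n) := t)))"
  have pi1: "\<pi> (Suc (Suc n)) = Suc n" "\<pi> (Suc n) = Suc n" and pi2: "\<And>i. 1 \<le> i \<Longrightarrow> i \<le> n \<Longrightarrow> \<pi> i = i"
    using assms(4,5,6) unfolding m by auto
  have minor_eq: "minor m f \<pi> (x(Suc n := b)) = A b b x" if x: "x \<in> cube n" for x b
  proof -
    have "(\<lambda>i. if i \<in> {1..m} then (x(Suc n := b)) (\<pi> i) else False) = x(Suc n := b, Suc (Suc n) := b)"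
    proof
      fix i
      show "(if i \<in> {1..m} then (x(Suc n := b)) (\<pi> i) else False) = (x(Suc n := b, Suc (Suc n) := b)) i"
      proof (cases "1 \<le> i \<and> i \<le> n")
        case True thus ?thesis using pi2[of i] unfolding m by auto
      next
        case False
        hence "x i = False" using x by (auto simp: cube_def)
        thus ?thesis using False pi1 unfolding m by auto
      qed
    qed
    thus ?thesis unfolding minor_def A_def by simp
  qed
  have L: "pinf p (m - 1) (minor m f \<pi>) (m - 1) = c * pexp p n (\<lambda>x. bval (A True True x \<noteq> A False False x))"
  proof -
    have "pinf p (Suc n) (minor m f \<pi>) (Suc n) = c * pexp p n (\<lambda>x. bval (minor m f \<pi> (x(Suc n := True)) \<noteq> minor m f \<pi> (x(Suc n := False))))"
      unfolding c_def by (rule inf_last)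
    also have "\<dots> = c * pexp p n (\<lambda>x. bval (A True True x \<noteq> A False False x))"
      by (rule arg_cong[where f = "\<lambda>t. c * t"], rule pexp_cong) (simp add: minor_eq)
    finally show ?thesis using m by simp
  qed
  have R2: "pinf p m f m = c * (p * pexp p n (\<lambda>x. bval (A True True x \<noteq> A True False x))
      + (1 - p) * pexp p n (\<lambda>x. bval (A False True x \<noteq> A False False x)))"
    unfolding c_def m inf_last pexp_Suc A_def by simp
  have R1: "pinf p m f (m - 1) = c * (p * pexp p n (\<lambda>x. bval (A True True x \<noteq> A False True x))
      + (1 - p) * pexp p n (\<lambda>x. bval (A True False x \<noteq> A False False x)))"
    unfolding c_def m A_def
    by (simp add: inf_other inf_last algebra_simps)
  have lin: "pexp p n (\<lambda>x. q * (p * bval (A True True x \<noteq> A False True x) + (1 - p) * bval (A True False x \<noteq> A False False x))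
       - (1 / q) * (p * bval (A True True x \<noteq> A True False x) + (1 - p) * bval (A False True x \<noteq> A False False x)))
     = q * (p * pexp p n (\<lambda>x. bval (A True True x \<noteq> A False True x))
      + (1 - p) * pexp p n (\<lambda>x. bval (A True False x \<noteq> A False False x)))
     - (1 / q) * (p * pexp p n (\<lambda>x. bval (A True True x \<noteq> A True False x))
      + (1 - p) * pexp p n (\<lambda>x. bval (A False True x \<noteq> A False False x)))"
    unfolding pexp_def by (simp add: sum.distrib sum_subtractf sum_distrib_left algebra_simps)
  have mono: "pexp p n (\<lambda>x. q * (p * bval (A True True x \<noteq> A False True x) + (1 - p) * bval (A True False x \<noteq> A False False x))
       - (1 / q) * (p * bval (A True True x \<noteq> A True False x) + (1 - p) * bval (A False True x \<noteq> A False False x)))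
     \<le> pexp p n (\<lambda>x. bval (A True True x \<noteq> A False False x))"
    using assms(1,2) by (intro pexp_mono pw[OF assms(1,2) q_def]) auto
  have "q * pinf p m f (m - 1) - (1 / q) * pinf p m f m
     = c * (q * (p * pexp p n (\<lambda>x. bval (A True True x \<noteq> A False True x))
      + (1 - p) * pexp p n (\<lambda>x. bval (A True False x \<noteq> A False False x)))
     - (1 / q) * (p * pexp p n (\<lambda>x. bval (A True True x \<noteq> A True False x))
      + (1 - p) * pexp p n (\<lambda>x. bval (A False True x \<noteq> A False False x))))"
    unfolding R1 R2 by (simp add: algebra_simps)
  also have "\<dots> \<le> c * pexp p n (\<lambda>x. bval (A True True x \<noteq> A False False x))"
    by (rule mult_left_mono[OF mono[unfolded lin] c0])
  finally show ?thesis unfolding L q_def .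
qed

end
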